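(* Let $\theta=(\gamma,\mu,\sigma)\in\mathbb{R}\times\mathbb{R}\times(0,\infty)$ and $x\in\mathbb{R}$ with $1+\gamma z>0$, where $z=(x-\mu)/\sigma$, and let $u=u_\gamma(z)$. If $\gamma\ge0$ and $z\ge0$, then, with $\gamma^{-2}\log(1+\gamma z)$ and $\gamma^{-1}$ interpreted as $+\infty$ when $\gamma=0$, \[|\partial_\gamma\ell_\theta(x)|\le\max\Big\{\min\Big(\frac{z^2}{2},\frac1{\gamma^2}\log(1+\gamma z)\Big),\ \min\Big(z,\frac1\gamma\Big)\Big\}.\] If $\gamma\le0$ and $z\ge0$, then $|\partial_\gamma\ell_\theta(x)|\le\frac{\max(z^2,z)}{1+\gamma z}$. If $\gamma\ge0$ and $z\le0$, then $|\partial_\gamma\ell_\theta(x)|\le u^{1+\gamma}\max\{(\log u)^2,\log u\}$. If $\gamma\le0$ and $z\le0$, then $|\partial_\gamma\ell_\theta(x)|\le u\max\{(\log u)^2,\log u\}$.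
   Context: $u_\gamma(z)=(1+\gamma z)^{-1/\gamma}$ for $\gamma\ne0$ and $e^{-z}$ for $\gamma=0$. $\ell_\theta(x)=-\log\sigma-u+(\gamma+1)\log u$ is the GEV log-density on $\{1+\gamma z>0\}$ (GEV density $p_\theta(x)=\sigma^{-1}e^{-u}u^{\gamma+1}\mathbf 1(1+\gamma z>0)$). Its partial derivative in $\gamma$ is $\partial_\gamma\ell_\theta(x)=(1-u)\,\partial_\gamma\log u-\frac{z}{1+\gamma z}$, where $\partial_\gamma\log u=\int_0^z\frac{t}{(1+\gamma t)^2}dt$ (equal to $\frac1\gamma(\frac1\gamma\log(1+\gamma z)-\frac{z}{1+\gamma z})$ for $\gamma\ne0$ and $z^2/2$ for $\gamma=0$). *)

theory Defs
  imports "HOL-Analysis.Analysis"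
begin

definition gev_z :: "real \<Rightarrow> real \<Rightarrow> real \<Rightarrow> real" where
  "gev_z mu sg x = (x - mu) / sg"

definition gev_u :: "real \<Rightarrow> real \<Rightarrow> real" where
  "gev_u g z = (if g = 0 then exp (- z) else (1 + g * z) powr (- 1 / g))"

definition gev_ell :: "real \<Rightarrow> real \<Rightarrow> real \<Rightarrow> real \<Rightarrow> real" where
  "gev_ell g mu sg x =
     (let z = gev_z mu sg x; u = gev_u g z in - ln sg - u + (g + 1) * ln u)"

definition dlogu :: "real \<Rightarrow> real \<Rightarrow> real" where
  "dlogu g z = (if g = 0 then z^2 / 2
                else (1 / g) * ((1 / g) * ln (1 + g * z) - z / (1 + g * z)))"

definition dgamma_ell :: "real \<Rightarrow> real \<Rightarrow> real \<Rightarrow> real \<Rightarrow> real" where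
  "dgamma_ell g mu sg x =
     (let z = gev_z mu sg x; u = gev_u g z in (1 - u) * dlogu g z - z / (1 + g * z))"

end

theory Submission
  imports Defs
begin

lemma lnA_le: assumes y: "(y::real) \<ge> 0" shows "ln (1+y) - y/(1+y) \<le> y^2/2"
proof -
  let ?f = "\<lambda>t::real. t^2/2 - ln (1+t) + t/(1+t)"
  have "?f 0 \<le> ?f y"
  proof (rule DERIV_nonneg_imp_nondecreasing[OF y])
    fix x :: real assume x: "0 \<le> x" "x \<le> y"
    have d: "DERIV ?f x :> (2*x/2 - 1/(1+x) + ((1+x) - x)/(1+x)^2)"
      using x by (auto intro!: derivative_eq_intros simp: power2_eq_square)
    have "2*x/2 - 1/(1+x) + ((1+x) - x)/(1+x)^2 = x*(x^2+2*x)/(1+x)^2"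
      using x by (simp add: divide_simps power2_eq_square) (simp add: algebra_simps)
    also have "\<dots> \<ge> 0" using x by simp
    finally show "\<exists>d. DERIV ?f x :> d \<and> d \<ge> 0" using d by blast
  qed
  thus ?thesis by simp
qed

lemma expm_le: assumes t: "(t::real) \<ge> 0" shows "t - 1 + exp (-t) \<le> t^2"
proof -
  have "exp t \<ge> 1 + t" by (rule exp_ge_add_one_self)
  hence "exp (-t) \<le> 1/(1+t)" using t by (simp add: exp_minus field_simps)
  also have "\<dots> \<le> 1 - t + t^2" using t by (simp add: field_simps power2_eq_square)
  finally show ?thesis by simp
qed

lemma absA: fixes u A B :: real assumes "0 \<le> u" "u \<le> 1" "0 \<le> A" "0 \<le> B"
  shows "\<bar>(1-u)*A - B\<bar> \<le> max A B"
proof -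
  have "0 \<le> (1-u)*A" "(1-u)*A \<le> A" using assms by (auto simp: algebra_simps mult_left_le)
  moreover have "\<And>c::real. 0 \<le> c \<Longrightarrow> c \<le> A \<Longrightarrow> \<bar>c - B\<bar> \<le> max A B" using assms by (auto simp: abs_if max_def)
  ultimately show ?thesis by blast
qed

lemma absB: fixes u A B :: real assumes "1 \<le> u" "0 \<le> A" "B \<le> 0"
  shows "\<bar>(1-u)*A - B\<bar> \<le> max ((u-1)*A) (-B)"
proof -
  have "0 \<le> (u-1)*A" using assms by auto
  thus ?thesis using assms by (auto simp: abs_if max_def algebra_simps)
qed

lemma dlogu_eq: assumes "g \<noteq> 0" "1 + g*z > 0"
  shows "dlogu g z = (ln (1+g*z) - 1 + 1/(1+g*z)) / g^2"
  using assms by (simp add: dlogu_def field_simps power2_eq_square)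

lemma dlogu_nonneg: assumes "g \<noteq> 0" "1 + g*z > 0" shows "dlogu g z \<ge> 0"
proof -
  have "ln (1/(1+g*z)) \<le> 1/(1+g*z) - 1" using assms by (intro ln_le_minus_one) simp
  hence "ln (1+g*z) - 1 + 1/(1+g*z) \<ge> 0" using assms by (simp add: ln_div)
  thus ?thesis using assms by (simp add: dlogu_eq)
qed

lemma dlogu_le: assumes "g \<noteq> 0" "1 + g*z > 0" shows "dlogu g z \<le> z^2/(1+g*z)"
proof -
  let ?w = "1+g*z"
  have "ln ?w \<le> ?w - 1" using assms by (intro ln_le_minus_one) simp
  moreover have "(?w - 1)^2/?w = ?w - 2 + 1/?w" using assms by (simp add: field_simps power2_eq_square)
  ultimately have "ln ?w - 1 + 1/?w \<le> (?w - 1)^2/?w" by linarith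
  also have "\<dots> = g^2 * (z^2/?w)" by (simp add: power_mult_distrib)
  finally show ?thesis using assms by (simp add: dlogu_eq divide_le_eq mult.commute)
qed

lemma u_exp: assumes "g \<noteq> 0" "1 + g*z > 0"
  shows "gev_u g z = exp (- ln (1+g*z) / g)"
  using assms by (simp add: gev_u_def powr_def)

lemma maxmin: fixes d A B a1 a2 b1 b2 :: real
  assumes "d \<le> max A B" "A \<le> a1" "A \<le> a2" "B \<le> b1" "B \<le> b2"
  shows "d \<le> max (min a1 a2) (min b1 b2)"
  using assms unfolding max_def min_def by (auto split: if_splits)

lemma case1: assumes g: "g > 0" and z: "z \<ge> 0"
  shows "\<bar>(1 - gev_u g z) * dlogu g z - z/(1+g*z)\<bar> \<le>
     max (min (z^2 / 2) (ln (1 + g * z) / g^2)) (min z (1 / g))"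
proof -
  let ?w = "1+g*z" let ?A = "dlogu g z"
  have w: "?w \<ge> 1" using g z by simp
  have u0: "0 \<le> gev_u g z" "gev_u g z \<le> 1" using g w by (auto simp: u_exp)
  have A0: "0 \<le> ?A" using g w by (intro dlogu_nonneg) auto
  have "\<bar>(1 - gev_u g z) * ?A - z/?w\<bar> \<le> max ?A (z/?w)"
    using u0 A0 w z by (intro absA) auto
  moreover have "?A \<le> z^2/2"
  proof -
    have "ln (1+g*z) - g*z/(1+g*z) \<le> (g*z)^2/2" using g z by (intro lnA_le) simp
    moreover have "?A * g^2 = ln ?w - g*z/?w"
    proof -
      have "1/?w - 1 = - (g*z/?w)" using w by (simp add: field_simps)
      moreover have "?A * g^2 = ln ?w - 1 + 1/?w" using g w by (simp add: dlogu_eq)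
      ultimately show ?thesis by linarith
    qed
    ultimately have "?A * g^2 \<le> z^2/2 * g^2" by (simp add: power_mult_distrib mult.commute)
    thus ?thesis using g by simp
  qed
  moreover have "?A \<le> ln ?w / g^2"
  proof -
    have "1/?w \<le> 1" using w by simp
    thus ?thesis using g w by (simp add: dlogu_eq divide_right_mono)
  qed
  moreover have "z/?w \<le> z"
  proof -
    have "0 \<le> z*(g*z)" using g z by simp
    thus ?thesis using w z by (simp add: divide_le_eq algebra_simps)
  qed
  moreover have "z/?w \<le> 1/g"
  proof -
    have w0: "?w > 0" using w by linarith
    have "z \<le> 1/g * ?w" using g by (simp add: field_simps)
    thus ?thesis using pos_divide_le_eq[OF w0] by blast
  qed
  ultimately show ?thesis by (rule maxmin)
qed

lemma case2: assumes g: "g < 0" and z: "z \<ge> 0" and w: "1 + g*z > 0"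
  shows "\<bar>(1 - gev_u g z) * dlogu g z - z/(1+g*z)\<bar> \<le> max (z^2) z / (1 + g * z)"
proof -
  let ?w = "1+g*z" let ?A = "dlogu g z"
  have w1: "?w \<le> 1" using g z by (simp add: mult_nonpos_nonneg)
  have "ln ?w \<le> 0" using w w1 by simp
  hence "- ln ?w / g \<le> 0" using g by (simp add: divide_nonpos_neg)
  hence u0: "0 \<le> gev_u g z" "gev_u g z \<le> 1" using g w by (auto simp: u_exp)
  have A0: "0 \<le> ?A" using g w by (intro dlogu_nonneg) auto
  have "\<bar>(1 - gev_u g z) * ?A - z/?w\<bar> \<le> max ?A (z/?w)"
    using u0 A0 w z by (intro absA) auto
  moreover have "?A \<le> max (z^2) z / ?w"
    using dlogu_le[of g z] g w by (smt (verit) divide_right_mono max.cobounded1)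
  moreover have "z/?w \<le> max (z^2) z / ?w"
    using w by (simp add: divide_right_mono)
  ultimately show ?thesis by simp
qed

lemma case3: assumes g: "g > 0" and z: "z \<le> 0" and w: "1 + g*z > 0"
  shows "\<bar>(1 - gev_u g z) * dlogu g z - z/(1+g*z)\<bar> \<le>
      gev_u g z powr (1 + g) * max ((ln (gev_u g z))^2) (ln (gev_u g z))"
proof -
  let ?w = "1+g*z" let ?A = "dlogu g z"
  define L where "L = - ln ?w / g"
  have u: "gev_u g z = exp L" using g w by (simp add: u_exp L_def)
  have w1: "?w \<le> 1" using g z by (simp add: mult_nonneg_nonpos)
  have lnw: "ln ?w \<le> g*z" using ln_le_minus_one[OF w] by simp
  have zL: "-z \<le> L" using lnw g by (simp add: L_def field_simps)
  have L0: "0 \<le> L" using z zL by linarith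
  have u1: "exp L \<ge> 1" using L0 by simp
  have up: "gev_u g z powr (1+g) = exp L / ?w"
  proof -
    have "gev_u g z powr (1+g) = exp ((1+g)*L)" by (simp add: u powr_def)
    also have "\<dots> = exp L * exp (g*L)" by (simp add: algebra_simps exp_add)
    also have "g*L = - ln ?w" using g by (simp add: L_def)
    also have "exp (- ln ?w) = 1/?w" using w by (simp add: exp_minus inverse_eq_divide)
    finally show ?thesis by simp
  qed
  have A0: "0 \<le> ?A" using g w by (intro dlogu_nonneg) auto
  have "\<bar>(1 - gev_u g z) * ?A - z/?w\<bar> \<le> max ((exp L - 1)*?A) (-(z/?w))"
  proof -
    have "z/?w \<le> 0" using w z by (simp add: divide_nonpos_pos)
    from absB[OF u1 A0 this] show ?thesis unfolding u .
  qed
  moreover have "(exp L - 1)*?A \<le> exp L / ?w * L^2"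
  proof -
    have "?A \<le> z^2/?w" using dlogu_le[of g z] g w by simp
    also have "z^2 \<le> L^2" using zL z by (smt (verit) power_mono power2_minus)
    hence "z^2/?w \<le> L^2/?w" using w by (simp add: divide_right_mono)
    finally have "?A \<le> L^2/?w" .
    hence "(exp L - 1)*?A \<le> exp L * (L^2/?w)" using A0 u1
      by (intro mult_mono) auto
    thus ?thesis by simp
  qed
  moreover have "-(z/?w) \<le> exp L / ?w * L"
  proof -
    have "-(z/?w) = (-z)/?w" by simp
    also have "\<dots> \<le> L/?w" using zL w by (intro divide_right_mono) auto
    also have "\<dots> \<le> exp L * L / ?w" using u1 L0 w
      by (intro divide_right_mono) (auto simp: mult_le_cancel_right1)
    finally show ?thesis by simp
  qed
  moreover have "exp L / ?w \<ge> 0" using w by simp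
  hence "exp L / ?w * L^2 \<le> exp L / ?w * max (L^2) L"
                "exp L / ?w * L \<le> exp L / ?w * max (L^2) L"
    by (metis max.cobounded1 max.cobounded2 mult_left_mono)+
  ultimately have "\<bar>(1 - gev_u g z) * ?A - z/?w\<bar> \<le> exp L / ?w * max (L^2) L"
    by (smt (verit, best) max.bounded_iff)
  moreover have "ln (gev_u g z) = L" using u by simp
  ultimately show ?thesis unfolding up by simp
qed

lemma case4: assumes g: "g < 0" and z: "z \<le> 0"
  shows "\<bar>(1 - gev_u g z) * dlogu g z - z/(1+g*z)\<bar> \<le>
      gev_u g z * max ((ln (gev_u g z))^2) (ln (gev_u g z))"
proof -
  let ?w = "1+g*z" let ?A = "dlogu g z"
  have w1: "?w \<ge> 1" using g z by (simp add: mult_nonpos_nonpos)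
  hence w: "?w > 0" by simp
  define L where "L = - ln ?w / g"
  have u: "gev_u g z = exp L" using g w by (simp add: u_exp L_def)
  have lnw0: "ln ?w \<ge> 0" using w1 by simp
  have L0: "0 \<le> L" using lnw0 g by (simp add: L_def divide_nonneg_neg)
  have u1: "exp L \<ge> 1" using L0 by simp
  have A0: "0 \<le> ?A" using g w by (intro dlogu_nonneg) auto
  have "\<bar>(1 - gev_u g z) * ?A - z/?w\<bar> \<le> max ((exp L - 1)*?A) (-(z/?w))"
  proof -
    have "z/?w \<le> 0" using w z by (simp add: divide_nonpos_pos)
    from absB[OF u1 A0 this] show ?thesis unfolding u .
  qed
  moreover have "?A \<le> L^2"
  proof -
    have "ln ?w - 1 + exp (- ln ?w) \<le> (ln ?w)^2" by (rule expm_le[OF lnw0])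
    hence "ln ?w - 1 + 1/?w \<le> (ln ?w)^2" using w by (simp add: exp_minus inverse_eq_divide)
    hence "(ln ?w - 1 + 1/?w)/g^2 \<le> (ln ?w)^2/g^2" by (simp add: divide_right_mono)
    thus ?thesis using g w by (simp add: dlogu_eq L_def power_divide)
  qed
  hence "(exp L - 1)*?A \<le> exp L * L^2" using A0 u1 by (intro mult_mono) auto
  moreover have "-(z/?w) \<le> exp L * L"
  proof -
    have "ln (1/?w) \<le> 1/?w - 1" using w by (intro ln_le_minus_one) simp
    hence "1 - 1/?w \<le> ln ?w" using w by (simp add: ln_div)
    moreover have "g*z/?w = 1 - 1/?w" using w by (simp add: field_simps)
    ultimately have "(-g)*(-(z/?w)) \<le> ln ?w" by simp
    hence "-(z/?w) \<le> L" using g by (simp add: L_def field_simps)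
    also have "L \<le> exp L * L" using u1 L0 by (simp add: mult_le_cancel_right1)
    finally show ?thesis .
  qed
  moreover have "exp L * L^2 \<le> exp L * max (L^2) L" "exp L * L \<le> exp L * max (L^2) L"
    by (auto intro!: mult_left_mono)
  ultimately have "\<bar>(1 - gev_u g z) * ?A - z/?w\<bar> \<le> exp L * max (L^2) L"
    by (smt (verit, best) max.bounded_iff)
  thus ?thesis unfolding u by simp
qed

lemma g0case: fixes z :: real
  shows "(z \<ge> 0 \<longrightarrow> \<bar>(1 - gev_u 0 z) * dlogu 0 z - z/(1+0*z)\<bar> \<le> max (z^2/2) z)
       \<and> (z \<le> 0 \<longrightarrow> \<bar>(1 - gev_u 0 z) * dlogu 0 z - z/(1+0*z)\<bar> \<le>
            gev_u 0 z * max ((ln (gev_u 0 z))^2) (ln (gev_u 0 z)))"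
proof (intro conjI impI)
  have u: "gev_u 0 z = exp (-z)" and A: "dlogu 0 z = z^2/2" by (simp_all add: gev_u_def dlogu_def)
  { assume z: "z \<ge> 0"
    have "\<bar>(1 - exp (-z)) * (z^2/2) - z\<bar> \<le> max (z^2/2) z"
      using z by (intro absA) auto
    thus "\<bar>(1 - gev_u 0 z) * dlogu 0 z - z/(1+0*z)\<bar> \<le> max (z^2/2) z" by (simp add: u A) }
  { assume z: "z \<le> 0"
    have u1: "exp (-z) \<ge> 1" using z by simp
    have "\<bar>(1 - exp (-z)) * (z^2/2) - z\<bar> \<le> max ((exp (-z) - 1) * (z^2/2)) (-z)"
      using z u1 by (intro absB) auto
    moreover have "(exp (-z) - 1) * (z^2/2) \<le> exp (-z) * (-z)^2"
      using u1 by (intro mult_mono) auto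
    moreover have "-z \<le> exp (-z) * (-z)" using mult_right_mono[OF u1, of "-z"] z by simp
    moreover have "exp (-z) * (-z)^2 \<le> exp (-z) * max ((-z)^2) (-z)"
         "exp (-z) * (-z) \<le> exp (-z) * max ((-z)^2) (-z)"
      by (metis max.cobounded1 max.cobounded2 mult_left_mono exp_ge_zero)+
    ultimately have "\<bar>(1 - exp (-z)) * (z^2/2) - z\<bar> \<le> exp (-z) * max ((-z)^2) (-z)"
      by (smt (verit, best) max.bounded_iff)
    thus "\<bar>(1 - gev_u 0 z) * dlogu 0 z - z/(1+0*z)\<bar> \<le>
            gev_u 0 z * max ((ln (gev_u 0 z))^2) (ln (gev_u 0 z))" by (simp add: u A) }
qed

theorem lemmaB4:
  fixes g mu sg x :: real
  defines "z \<equiv> gev_z mu sg x"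
  defines "u \<equiv> gev_u g z"
  assumes sg_pos: "sg > 0"
    and supp: "1 + g * z > 0"
  shows "(g \<ge> 0 \<and> z \<ge> 0 \<longrightarrow>
            \<bar>dgamma_ell g mu sg x\<bar> \<le>
              (if g = 0 then max (z^2 / 2) z
               else max (min (z^2 / 2) (ln (1 + g * z) / g^2)) (min z (1 / g))))
       \<and> (g \<le> 0 \<and> z \<ge> 0 \<longrightarrow>
            \<bar>dgamma_ell g mu sg x\<bar> \<le> max (z^2) z / (1 + g * z))
       \<and> (g \<ge> 0 \<and> z \<le> 0 \<longrightarrow>
            \<bar>dgamma_ell g mu sg x\<bar> \<le> u powr (1 + g) * max ((ln u)^2) (ln u))
       \<and> (g \<le> 0 \<and> z \<le> 0 \<longrightarrow>
            \<bar>dgamma_ell g mu sg x\<bar> \<le> u * max ((ln u)^2) (ln u))"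
proof -
  have D: "dgamma_ell g mu sg x = (1 - gev_u g z)*dlogu g z - z/(1+g*z)"
    by (simp add: dgamma_ell_def Let_def z_def)
  show ?thesis
  proof (cases "g = 0")
    case True
    have up: "u > 0" by (simp add: u_def gev_u_def True)
    have m: "max (z^2/2) z \<le> max (z^2) z"
      by (intro max.mono) auto
    have D0: "dgamma_ell g mu sg x = (1 - gev_u 0 z) * dlogu 0 z - z/(1+0*z)"
      using D True by simp
    have u0: "u = gev_u 0 z" using True by (simp add: u_def)
    have up0: "gev_u 0 z > 0" by (simp add: gev_u_def)
    show ?thesis unfolding D0 u0 using g0case[of z] m True up0
      by (auto intro: order_trans)
  next
    case False
    show ?thesis
    proof (cases "g > 0")
      case True
      thus ?thesis using case1[OF True, of z] case3[OF True _ supp] False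
        unfolding D u_def by auto
    next
      case g: False
      hence gn: "g < 0" using False by simp
      thus ?thesis using case2[OF gn _ supp] case4[OF gn] False
        unfolding D u_def by auto
    qed
  qed
qed

end
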